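(* Let $\ell\ge 1$ and $k$ be integers with $k>2\ell+2$. Let $G_k$, $r$, $s_1,s_2,t_1,t_2$ and $Z$ be as defined in the context, and let $G$ be obtained from $G_k$ by replacing each edge of $G_k$ that has at least one end in $Z$ by a path of length more than $2\ell$ (the lengths of these paths may differ; their internal vertices are new). Let $S=\{r,s_1,s_2\}$ and $T=\{r,t_1,t_2\}$. Then for every $X\subseteq V(G)$ with $|X|\le 2$, there is a path $P$ of $G$ between $S$ and $T$ such that $d(X,P)>\ell$.
   Context: For an integer $k\ge 2$, let $B$ be a uniform binary tree of depth $k$: a rooted tree with root $r$ and $2^k-1$ vertices, in which every non-leaf vertex has exactly two children (a left child and a right child), and every path from the root to a leaf has exactly $k-1$ edges. Draw $B$ in the plane in the usual way, and let $p_1,\dots,p_m$ ($m=2^{k-2}$) be the vertices at distance $k-2$ from $r$, in left-to-right order. Let $\lambda_i,\rho_i$ be the left and right children (leaves) of $p_i$. Add two new vertices $s_2,t_1$, and let $Z$ be the set of leaves of $B$ together with $s_2,t_1$. Add a path $M$ with vertex set $Z$ whose vertices in order are $$\lambda_1,\ s_2,\ \lambda_2,\ \rho_1,\ \lambda_3,\ \rho_2,\ \dots,\ \lambda_m,\ \rho_{m-1},\ t_1,\ \rho_m .$$ The resulting graph $B\cup M$ is $G_k$. Set $s_1=\lambda_1$ and $t_2=\rho_m$ (the ends of $M$), so $s_2,t_1$ are the neighbours in $M$ of $s_1,t_2$ respectively. A path between $S$ and $T$ is a path with one end in $S$ and the other in $T$ (a one-vertex path on a vertex of $S\cap T$ counts).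 For sets of vertices or subgraphs $X,Y$, $d(X,Y)$ is the number of edges of a shortest path with one end in $X$ and the other in $Y$ (infinite if there is none). *)

theory Defs
  imports Main
begin

(* Vertices: tree vertices in heap numbering (root 1, children of i are 2i, 2i+1,
   vertices 1..2^k-1), the two new vertices s_2, t_1, and subdivision vertices
   Sub e j = j-th internal vertex of the subdivided base edge e. *)
datatype vtx = Tr nat | S2 | T1 | Sub "vtx \<times> vtx" nat

definition m_of :: "nat \<Rightarrow> nat" where "m_of k = 2 ^ (k - 2)"

(* p_i = Tr (2^(k-2) + i - 1), i = 1..m; lambda_i, rho_i its left / right child *)
definition lam :: "nat \<Rightarrow> nat \<Rightarrow> vtx" where "lam k i = Tr (2 * (2 ^ (k - 2) + i - 1))"
definition rho :: "nat \<Rightarrow> nat \<Rightarrow> vtx" where "rho k i = Tr (2 * (2 ^ (k - 2) + i - 1) + 1)"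

definition root :: vtx where "root = Tr 1"

definition tree_vertices :: "nat \<Rightarrow> vtx set" where
  "tree_vertices k = Tr ` {1..<2 ^ k}"

definition leaves :: "nat \<Rightarrow> vtx set" where
  "leaves k = Tr ` {2 ^ (k - 1)..<2 ^ k}"

definition Zset :: "nat \<Rightarrow> vtx set" where
  "Zset k = leaves k \<union> {S2, T1}"

(* the path M: lambda_1, s_2, lambda_2, rho_1, ..., lambda_m, rho_{m-1}, t_1, rho_m *)
definition Mlist :: "nat \<Rightarrow> vtx list" where
  "Mlist k = [lam k 1, S2] @ concat (map (\<lambda>i. [lam k i, rho k (i - 1)]) [2..<m_of k + 1])
             @ [T1, rho k (m_of k)]"

definition tree_edges :: "nat \<Rightarrow> (vtx \<times> vtx) set" where
  "tree_edges k = {(Tr i, Tr j) | i j. 1 \<le> i \<and> j < 2 ^ k \<and> (j = 2 * i \<or> j = 2 * i + 1)}"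

definition M_edges :: "nat \<Rightarrow> (vtx \<times> vtx) set" where
  "M_edges k = {(Mlist k ! i, Mlist k ! (i + 1)) | i. i + 1 < length (Mlist k)}"

(* edges of G_k = B \<union> M (as oriented pairs; the graph is undirected) *)
definition base_edges :: "nat \<Rightarrow> (vtx \<times> vtx) set" where
  "base_edges k = tree_edges k \<union> M_edges k"

definition sub_edges :: "nat \<Rightarrow> (vtx \<times> vtx) set" where
  "sub_edges k = {(u, v) \<in> base_edges k. u \<in> Zset k \<or> v \<in> Zset k}"

(* G: edge e \<in> sub_edges k is replaced by a path of length L e *)
definition subv :: "((vtx \<times> vtx) \<Rightarrow> nat) \<Rightarrow> (vtx \<times> vtx) \<Rightarrow> nat \<Rightarrow> vtx" where
  "subv L e j = (if j = 0 then fst e else if j = L e then snd e else Sub e j)"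

definition GV :: "nat \<Rightarrow> ((vtx \<times> vtx) \<Rightarrow> nat) \<Rightarrow> vtx set" where
  "GV k L = tree_vertices k \<union> {S2, T1} \<union> {Sub e j | e j. e \<in> sub_edges k \<and> 1 \<le> j \<and> j < L e}"

definition GE :: "nat \<Rightarrow> ((vtx \<times> vtx) \<Rightarrow> nat) \<Rightarrow> (vtx \<times> vtx) set" where
  "GE k L = (base_edges k - sub_edges k)
            \<union> {(subv L e j, subv L e (j + 1)) | e j. e \<in> sub_edges k \<and> j < L e}"

definition adj :: "nat \<Rightarrow> ((vtx \<times> vtx) \<Rightarrow> nat) \<Rightarrow> vtx \<Rightarrow> vtx \<Rightarrow> bool" where
  "adj k L x y \<longleftrightarrow> (x, y) \<in> GE k L \<or> (y, x) \<in> GE k L"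

definition is_path :: "nat \<Rightarrow> ((vtx \<times> vtx) \<Rightarrow> nat) \<Rightarrow> vtx list \<Rightarrow> bool" where
  "is_path k L p \<longleftrightarrow> p \<noteq> [] \<and> distinct p \<and> set p \<subseteq> GV k L \<and>
     (\<forall>i. i + 1 < length p \<longrightarrow> adj k L (p ! i) (p ! (i + 1)))"

(* d(x,v) \<le> l in G: some path from x to v with at most l edges *)
definition dist_le :: "nat \<Rightarrow> ((vtx \<times> vtx) \<Rightarrow> nat) \<Rightarrow> vtx \<Rightarrow> vtx \<Rightarrow> nat \<Rightarrow> bool" where
  "dist_le k L x v l \<longleftrightarrow> (\<exists>q. is_path k L q \<and> hd q = x \<and> last q = v \<and> length q \<le> l + 1)"

end

theory Submission
  imports Defs
begin

lemma concat_pairs: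
  "concat (map (\<lambda>i. [f i, g i]) [a..<a+n]) =
   map (\<lambda>t. if even t then f (a + t div 2) else g (a + t div 2)) [0..<2*n]"
proof (induction n)
  case 0 then show ?case by simp
next
  case (Suc n)
  have "[0..<2 * Suc n] = [0..<2*n] @ [2*n, 2*n+1]" by simp
  then show ?case using Suc by simp
qed

lemma succ_nth: "successively P xs \<longleftrightarrow> (\<forall>i. Suc i < length xs \<longrightarrow> P (xs!i) (xs!Suc i))"
proof (induction P xs rule: successively.induct)
  case (3 P x y xs)
  have e: "\<And>R. (\<forall>i. R (i::nat)) \<longleftrightarrow> R 0 \<and> (\<forall>j. R (Suc j))" by (metis nat.exhaust)
  show ?case by (subst e) (simp add: 3)
qed simp_all

fun dep :: "nat \<Rightarrow> nat" where
  "dep n = (if n < 2 then 0 else Suc (dep (n div 2)))"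
declare dep.simps[simp del]

lemma dep_rec: "n \<ge> 2 \<Longrightarrow> dep n = Suc (dep (n div 2))"
  by (simp add: dep.simps)

lemma dep_eqI: "2^d \<le> n \<Longrightarrow> n < 2 * 2^d \<Longrightarrow> dep n = d"
proof (induction d arbitrary: n)
  case 0 then show ?case by (simp add: dep.simps)
next
  case (Suc d)
  have "dep (n div 2) = d" using Suc by (intro Suc.IH) auto
  moreover have "n \<ge> 2" using Suc.prems by (metis le_trans one_le_power power_Suc mult_le_mono2 mult.right_neutral one_le_numeral)
  ultimately show ?case by (simp add: dep_rec)
qed

lemma dep_root: "dep 1 = 0" "dep (Suc 0) = 0" by (simp_all add: dep.simps)


locale cfg =
  fixes l k :: nat and L :: "(vtx \<times> vtx) \<Rightarrow> nat"
  assumes l1: "l \<ge> 1" and kl: "k > 2 * l + 2"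
    and Lb: "\<forall>e \<in> sub_edges k. L e > 2 * l"
begin

abbreviation "m \<equiv> m_of k"

lemma k5: "k \<ge> 5" using l1 kl by linarith

lemma pow1: "2^(k-1) = 2*m" and pow0: "2^k = 4*m" and pow1': "2^(k - Suc 0) = 2*m" and m8: "m \<ge> 8"
proof -
  obtain j where j: "k = j + 2" using k5 by (metis le_add_diff_inverse2 le_trans numeral_le_iff semiring_norm(68,69,72) one_le_numeral)
  show "2^(k-1) = 2*m" "2^k = 4*m" by (simp_all add: m_of_def j)
  then show "2^(k - Suc 0) = 2*m" by simp
  have "2^3 \<le> (2::nat)^(k-2)" using k5 by (intro power_increasing) auto
  then show "m \<ge> 8" by (simp add: m_of_def)
qed

definition mz :: "nat \<Rightarrow> vtx" where
  "mz t = (if t = 0 then lam k 1 else if t = 1 then S2 else if t = 2 * m then T1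
           else if t = 2 * m + 1 then rho k m else if even t then lam k (t div 2 + 1)
           else rho k ((t - 1) div 2))"

lemma Mlist_eq: "Mlist k = map mz [0..<2*m+2]"
proof -
  have c: "concat (map (\<lambda>i. [lam k i, rho k (i - 1)]) [2..<m + 1]) =
     map (\<lambda>t. if even t then lam k (2 + t div 2) else rho k (2 + t div 2 - 1)) [0..<2*(m-1)]"
    using concat_pairs[of "lam k" "\<lambda>i. rho k (i - 1)" 2 "m - 1"] m8 by simp
  show ?thesis
  proof (rule nth_equalityI)
    show "length (Mlist k) = length (map mz [0..<2 * m + 2])"
      using m8 unfolding Mlist_def c by simp
  next
    fix t assume "t < length (Mlist k)"
    then have t: "t < 2*m+2" using m8 unfolding Mlist_def c by simp
    show "Mlist k ! t = map mz [0..<2 * m + 2] ! t"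
    proof -
      consider "t = 0" | "t = 1" | "2 \<le> t \<and> t < 2*m" | "t = 2*m" | "t = 2*m+1" using t by linarith
      then show ?thesis
      proof cases
        case 3
        obtain s where s: "t = s + 2" using 3 by (metis le_add_diff_inverse2)
        have sl: "s < 2*(m-1)" using 3 s by linarith
        have "Mlist k ! t = map (\<lambda>t. if even t then lam k (2 + t div 2) else rho k (2 + t div 2 - 1)) [0..<2*(m-1)] ! s"
          using sl unfolding Mlist_def c s by (simp add: nth_append)
        also have "\<dots> = mz t" using 3 sl m8 unfolding mz_def s
          by (auto elim!: evenE oddE)
        finally show ?thesis using t by (simp del: upt_Suc)
      qed (use m8 t in \<open>unfold Mlist_def c, auto simp: mz_def nth_append simp del: upt_Suc\<close>)
    qed
  qed
qed

lemma lam_Tr: "i \<ge> 1 \<Longrightarrow> lam k i = Tr (2*m + 2*i - 2)"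
  and rho_Tr: "i \<ge> 1 \<Longrightarrow> rho k i = Tr (2*m + 2*i - 1)"
  by (auto simp: lam_def rho_def m_of_def)

lemma mz_Tr: "t \<le> 2*m+1 \<Longrightarrow> t \<noteq> 1 \<Longrightarrow> t \<noteq> 2*m \<Longrightarrow>
   mz t = Tr (2*m + (if even t then t else t - 2))"
  using m8 by (auto simp: mz_def lam_Tr rho_Tr elim!: evenE oddE)

lemma mz_1: "mz 1 = S2" and mz_1': "mz (Suc 0) = S2" and mz_2m: "mz (2*m) = T1" and mz_0: "mz 0 = lam k 1"
  and mz_last: "mz (2*m+1) = rho k m" and mz_last': "mz (Suc (2*m)) = rho k m"
  using m8 by (auto simp: mz_def)

lemma mz_inj: "s \<le> 2*m+1 \<Longrightarrow> t \<le> 2*m+1 \<Longrightarrow> mz s = mz t \<Longrightarrow> s = t"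
proof -
  assume a: "s \<le> 2*m+1" "t \<le> 2*m+1" "mz s = mz t"
  consider "s = 1" | "s = 2*m" | "s \<noteq> 1 \<and> s \<noteq> 2*m" by blast
  then show "s = t"
  proof cases
    case 1 then show ?thesis using a m8 mz_Tr[of t] by (cases "t = 1 \<or> t = 2*m") (auto simp: mz_1 mz_1' mz_2m)
  next
    case 2 then show ?thesis using a m8 mz_Tr[of t] by (cases "t = 1 \<or> t = 2*m") (auto simp: mz_1 mz_1' mz_2m)
  next
    case 3
    show ?thesis
    proof (cases "t = 1 \<or> t = 2*m")
      case True then show ?thesis using a 3 m8 mz_Tr[of s] by (auto simp: mz_1 mz_1' mz_2m)
    next
      case False
      have "(if even s then s else s - 2) = (if even t then t else t - 2)"
        using a 3 False mz_Tr[of s] mz_Tr[of t] by auto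
      moreover have "s \<noteq> 1" "t \<noteq> 1" using 3 False by auto
      ultimately show ?thesis by (auto split: if_splits; presburger)
    qed
  qed
qed

lemma Zset_eq: "Zset k = Tr ` {2*m..<4*m} \<union> {S2, T1}"
  by (simp add: Zset_def leaves_def pow0 pow1 pow1')

lemma tv_eq: "tree_vertices k = Tr ` {1..<4*m}"
  by (simp add: tree_vertices_def pow0)

lemma mz_Z: "t \<le> 2*m+1 \<Longrightarrow> mz t \<in> Zset k"
proof -
  assume t: "t \<le> 2*m+1"
  consider "t = 1" | "t = 2*m" | "t \<noteq> 1 \<and> t \<noteq> 2*m" by blast
  then show ?thesis
  proof cases
    case 3 then show ?thesis using t m8 mz_Tr[of t] by (auto simp: Zset_eq)
  qed (auto simp: mz_1 mz_1' mz_2m Zset_eq)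
qed

lemma Z_mz: "z \<in> Zset k \<Longrightarrow> \<exists>t \<le> 2*m+1. z = mz t"
proof -
  assume z: "z \<in> Zset k"
  show ?thesis
  proof (cases "z = S2 \<or> z = T1")
    case True
    have "1 \<le> 2*m+1" "2*m \<le> 2*m+1" by simp_all
    then show ?thesis using True
    proof (elim disjE)
      assume "z = S2" then show ?thesis using mz_1 by (intro exI[of _ 1]) simp
    next
      assume "z = T1" then show ?thesis using mz_2m by (intro exI[of _ "2*m"]) simp
    qed
  next
    case False
    then have "z \<in> Tr ` {2*m..<4*m}" using z unfolding Zset_eq by blast
    then obtain c where c: "z = Tr c" "2*m \<le> c" "c < 4*m" by auto
    define w where "w = c - 2*m"
    have co: "c = 2*m + w" "w < 2*m" using c by (auto simp: w_def)
    show ?thesis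
    proof (cases "even w")
      case True
      have p: "w \<le> 2*m+1" "w \<noteq> 1" "w \<noteq> 2*m" using co True by auto
      have "mz w = z" using mz_Tr[OF p] co c True by simp
      with p show ?thesis by (intro exI[of _ w]) simp
    next
      case False
      obtain q where q: "w = 2*q+1" using False oddE by blast
      have p: "w+2 \<le> 2*m+1" "w+2 \<noteq> 1" "w+2 \<noteq> 2*m" using co q by (linarith, linarith, presburger)
      have "mz (w+2) = z" using mz_Tr[OF p] co c False by simp
      with p show ?thesis by (intro exI[of _ "w+2"]) simp
    qed
  qed
qed

lemma lam_mz: "1 \<le> i \<Longrightarrow> i \<le> m \<Longrightarrow> lam k i = mz (2*i - 2)"
proof -
  assume i: "1 \<le> i" "i \<le> m"
  have "2*i-2 \<le> 2*m+1" "2*i-2 \<noteq> 1" "2*i-2 \<noteq> 2*m" "even (2*i-2)" using i by (arith, arith, arith, presburger)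
  then have "mz (2*i-2) = Tr (2*m + (2*i - 2))" using mz_Tr[of "2*i-2"] by auto
  then show ?thesis using i by (simp add: lam_Tr)
qed

lemma rho_mz: "1 \<le> i \<Longrightarrow> i \<le> m \<Longrightarrow> rho k i = mz (2*i + 1)"
proof -
  assume i: "1 \<le> i" "i \<le> m"
  have "2*i+1 \<le> 2*m+1" "2*i+1 \<noteq> 1" "2*i+1 \<noteq> 2*m" "odd (2*i+1)" using i by (arith, arith, arith, presburger)
  then have "mz (2*i+1) = Tr (2*m + (2*i + 1 - 2))" using mz_Tr[of "2*i+1"] by presburger
  then show ?thesis using i by (simp add: rho_Tr)
qed

definition me :: "nat \<Rightarrow> vtx \<times> vtx" where "me t = (mz t, mz (t+1))"
definition pv :: "nat \<Rightarrow> vtx" where "pv i = Tr (m + i - 1)"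
definition ll :: "nat \<Rightarrow> vtx \<times> vtx" where "ll i = (pv i, lam k i)"
definition lr :: "nat \<Rightarrow> vtx \<times> vtx" where "lr i = (pv i, rho k i)"

lemma Mlist_nth: "t < 2*m+2 \<Longrightarrow> Mlist k ! t = mz t"
  by (simp add: Mlist_eq del: upt_Suc)

lemma Mlist_len: "length (Mlist k) = 2*m+2"
  by (simp add: Mlist_eq del: upt_Suc)

lemma M_edges_eq: "M_edges k = me ` {..<2*m+1}"
proof -
  have "M_edges k = {(Mlist k ! i, Mlist k ! (i + 1)) |i. i < 2*m+1}"
    unfolding M_edges_def Mlist_len by simp
  also have "\<dots> = {me i |i. i < 2*m+1}"
  proof (intro Collect_cong iffI; elim exE conjE)
    fix x i assume "x = (Mlist k ! i, Mlist k ! (i + 1))" "i < 2*m+1"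
    then show "\<exists>i. x = me i \<and> i < 2 * m + 1" using Mlist_nth[of i] Mlist_nth[of "i+1"] by (auto simp: me_def)
  next
    fix x i assume "x = me i" "i < 2*m+1"
    then show "\<exists>i. x = (Mlist k ! i, Mlist k ! (i + 1)) \<and> i < 2 * m + 1" using Mlist_nth[of i] Mlist_nth[of "i+1"]
      by (intro exI[of _ i]) (auto simp: me_def)
  qed
  finally show ?thesis by auto
qed

lemma Z_not_Sub: "z \<in> Zset k \<Longrightarrow> z \<noteq> Sub e j"
  by (auto simp: Zset_eq)

lemma me_sub: "t < 2*m+1 \<Longrightarrow> me t \<in> sub_edges k"
  unfolding sub_edges_def base_edges_def M_edges_eq
  using mz_Z[of t] by (auto simp: me_def)

lemma leaf_sub: "2*m \<le> c \<Longrightarrow> c < 4*m \<Longrightarrow> (Tr (c div 2), Tr c) \<in> sub_edges k"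
proof -
  assume c: "2*m \<le> c" "c < 4*m"
  have "(Tr (c div 2), Tr c) \<in> tree_edges k"
    unfolding tree_edges_def pow0 using c m8 by auto
  moreover have "Tr c \<in> Zset k" using c by (auto simp: Zset_eq)
  ultimately show ?thesis by (auto simp: sub_edges_def base_edges_def)
qed

lemma ll_eq: "1 \<le> i \<Longrightarrow> i \<le> m \<Longrightarrow> ll i = (Tr ((2*m+2*i-2) div 2), Tr (2*m+2*i-2))"
  and lr_eq: "1 \<le> i \<Longrightarrow> i \<le> m \<Longrightarrow> lr i = (Tr ((2*m+2*i-1) div 2), Tr (2*m+2*i-1))"
proof -
  assume i: "1 \<le> i" "i \<le> m"
  have "(2*m+2*i-2) div 2 = m + i - 1" "(2*m+2*i-1) div 2 = m + i - 1" using i by presburger+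
  then show "ll i = (Tr ((2*m+2*i-2) div 2), Tr (2*m+2*i-2))" "lr i = (Tr ((2*m+2*i-1) div 2), Tr (2*m+2*i-1))"
    using i by (simp_all add: ll_def lr_def pv_def lam_Tr rho_Tr)
qed

lemma ll_sub: "1 \<le> i \<Longrightarrow> i \<le> m \<Longrightarrow> ll i \<in> sub_edges k"
  and lr_sub: "1 \<le> i \<Longrightarrow> i \<le> m \<Longrightarrow> lr i \<in> sub_edges k"
  by (simp_all add: ll_eq lr_eq leaf_sub)

lemma sub_cases: "e \<in> sub_edges k \<Longrightarrow>
   (\<exists>t<2*m+1. e = me t) \<or> (\<exists>c. 2*m \<le> c \<and> c < 4*m \<and> e = (Tr (c div 2), Tr c))"
proof -
  assume e: "e \<in> sub_edges k"
  show ?thesis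
  proof (cases "e \<in> M_edges k")
    case True then show ?thesis unfolding M_edges_eq by auto
  next
    case False
    then have "e \<in> tree_edges k" "fst e \<in> Zset k \<or> snd e \<in> Zset k"
      using e by (auto simp: sub_edges_def base_edges_def)
    then obtain i j where ij: "e = (Tr i, Tr j)" "1 \<le> i" "j < 4*m" "j = 2*i \<or> j = 2*i+1"
      "Tr i \<in> Zset k \<or> Tr j \<in> Zset k"
      unfolding tree_edges_def pow0 by auto
    have "\<not> (2*m \<le> i)" using ij by auto
    then have "Tr i \<notin> Zset k" by (auto simp: Zset_eq)
    then have "Tr j \<in> Zset k" using ij by auto
    then have "2*m \<le> j" by (auto simp: Zset_eq)
    moreover have "i = j div 2" using ij by auto
    ultimately show ?thesis using ij by auto
  qed
qed

lemma nonsub: "(a,b) \<in> base_edges k - sub_edges k \<Longrightarrow>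
   \<exists>i j. a = Tr i \<and> b = Tr j \<and> 1 \<le> i \<and> (j = 2*i \<or> j = 2*i+1) \<and> j < 2*m"
proof -
  assume ab: "(a,b) \<in> base_edges k - sub_edges k"
  then have "(a,b) \<notin> M_edges k" using me_sub unfolding M_edges_eq by auto
  then have "(a,b) \<in> tree_edges k" "a \<notin> Zset k" "b \<notin> Zset k"
    using ab by (auto simp: sub_edges_def base_edges_def)
  then obtain i j where ij: "a = Tr i" "b = Tr j" "1 \<le> i" "j < 4*m" "j = 2*i \<or> j = 2*i+1"
    unfolding tree_edges_def pow0 by auto
  have "\<not> 2*m \<le> j" using \<open>b \<notin> Zset k\<close> ij by (auto simp: Zset_eq)
  then show ?thesis using ij by auto
qed

lemma Lsub: "e \<in> sub_edges k \<Longrightarrow> L e \<ge> 2*l+1"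
  using Lb by auto

lemma sub_ends: "e \<in> sub_edges k \<Longrightarrow> fst e \<noteq> Sub e' j \<and> snd e \<noteq> Sub e' j"
proof -
  assume e: "e \<in> sub_edges k"
  show ?thesis using sub_cases[OF e]
  proof (elim disjE exE conjE)
    fix t assume "t < 2*m+1" "e = me t"
    then show ?thesis using Z_not_Sub mz_Z[of t] mz_Z[of "t+1"] by (auto simp: me_def)
  qed auto
qed

lemma subv0: "subv L e 0 = fst e" by (simp add: subv_def)
lemma subvL: "e \<in> sub_edges k \<Longrightarrow> subv L e (L e) = snd e"
  using Lsub[of e] by (simp add: subv_def)
lemma subvj: "0 < j \<Longrightarrow> j < L e \<Longrightarrow> subv L e j = Sub e j" by (simp add: subv_def)


definition lip :: "(vtx \<Rightarrow> int) \<Rightarrow> bool" where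
  "lip f \<longleftrightarrow> (\<forall>a b. (a,b) \<in> GE k L \<longrightarrow> \<bar>f a - f b\<bar> \<le> 1)"

lemma lipI:
  assumes tree: "\<And>i j. 1 \<le> i \<Longrightarrow> j = 2*i \<or> j = 2*i+1 \<Longrightarrow> j < 2*m \<Longrightarrow> \<bar>f (Tr i) - f (Tr j)\<bar> \<le> 1"
    and sub: "\<And>e. e \<in> sub_edges k \<Longrightarrow> \<exists>H. (\<forall>j. \<bar>H j - H (Suc j)\<bar> \<le> 1) \<and> (\<forall>j \<le> L e. f (subv L e j) = H j)"
  shows "lip f"
  unfolding lip_def
proof (intro allI impI)
  fix a b assume ab: "(a, b) \<in> GE k L"
  show "\<bar>f a - f b\<bar> \<le> 1"
  proof (cases "(a,b) \<in> base_edges k - sub_edges k")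
    case True
    then show ?thesis using nonsub[OF True] tree by auto
  next
    case False
    then obtain e j where ej: "e \<in> sub_edges k" "j < L e" "a = subv L e j" "b = subv L e (j+1)"
      using ab unfolding GE_def by blast
    obtain H where H: "\<forall>j. \<bar>H j - H (Suc j)\<bar> \<le> 1" "\<forall>j \<le> L e. f (subv L e j) = H j"
      using sub[OF ej(1)] by blast
    show ?thesis using H ej by simp
  qed
qed

lemma lip_path: "lip f \<Longrightarrow> successively (adj k L) q \<Longrightarrow> q \<noteq> [] \<Longrightarrow>
    \<bar>f (hd q) - f (last q)\<bar> \<le> int (length q) - 1"
proof (induction q)
  case Nil then show ?case by simp
next
  case (Cons x xs)
  show ?case
  proof (cases "xs = []")
    case True then show ?thesis by simp
  next
    case False
    have "adj k L x (hd xs)" "successively (adj k L) xs" using Cons.prems False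
      by (auto simp: successively_Cons)
    then have "\<bar>f x - f (hd xs)\<bar> \<le> 1" using Cons.prems(1) unfolding adj_def lip_def
      by (metis abs_minus_commute)
    moreover have "\<bar>f (hd xs) - f (last xs)\<bar> \<le> int (length xs) - 1"
      using Cons.IH Cons.prems False \<open>successively (adj k L) xs\<close> by blast
    ultimately show ?thesis using False by simp
  qed
qed

lemma far: "lip f \<Longrightarrow> \<bar>f x - f v\<bar> > int l \<Longrightarrow> \<not> dist_le k L x v l"
proof
  assume f: "lip f" "\<bar>f x - f v\<bar> > int l" and d: "dist_le k L x v l"
  then obtain q where q: "is_path k L q" "hd q = x" "last q = v" "length q \<le> l + 1"
    unfolding dist_le_def by blast
  have "successively (adj k L) q" "q \<noteq> []" using q(1) unfolding is_path_def succ_nth by auto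
  then have "\<bar>f x - f v\<bar> \<le> int (length q) - 1" using lip_path[OF f(1)] q by blast
  then show False using q(4) f(2) by linarith
qed

definition vcase :: "(vtx \<Rightarrow> int) \<Rightarrow> ((vtx \<times> vtx) \<Rightarrow> nat \<Rightarrow> int) \<Rightarrow> vtx \<Rightarrow> int" where
  "vcase G F v = (case v of Sub e j \<Rightarrow> F e j | _ \<Rightarrow> G v)"

lemma vcase_Sub[simp]: "vcase G F (Sub e j) = F e j" by (simp add: vcase_def)
lemma vcase_base: "(\<And>e j. v \<noteq> Sub e j) \<Longrightarrow> vcase G F v = G v"
  by (cases v) (auto simp: vcase_def)

lemma lip_vcase:
  assumes tree: "\<And>i j. 1 \<le> i \<Longrightarrow> j = 2*i \<or> j = 2*i+1 \<Longrightarrow> j < 2*m \<Longrightarrow> \<bar>G (Tr i) - G (Tr j)\<bar> \<le> 1"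
    and sub: "\<And>e. e \<in> sub_edges k \<Longrightarrow> \<exists>H. (\<forall>j. \<bar>H j - H (Suc j)\<bar> \<le> 1) \<and> G (fst e) = H 0
       \<and> G (snd e) = H (L e) \<and> (\<forall>j. 0 < j \<longrightarrow> j < L e \<longrightarrow> F e j = H j)"
  shows "lip (vcase G F)"
proof (rule lipI)
  fix i j :: nat assume "1 \<le> i" "j = 2*i \<or> j = 2*i+1" "j < 2*m"
  then show "\<bar>vcase G F (Tr i) - vcase G F (Tr j)\<bar> \<le> 1" using tree by (simp add: vcase_def)
next
  fix e assume e: "e \<in> sub_edges k"
  obtain H where H: "\<forall>j. \<bar>H j - H (Suc j)\<bar> \<le> 1" "G (fst e) = H 0"
       "G (snd e) = H (L e)" "\<forall>j. 0 < j \<longrightarrow> j < L e \<longrightarrow> F e j = H j"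
    using sub[OF e] by blast
  have "\<forall>j\<le>L e. vcase G F (subv L e j) = H j"
  proof (intro allI impI)
    fix j assume j: "j \<le> L e"
    consider "j = 0" | "j = L e" | "0 < j \<and> j < L e" using j by linarith
    then show "vcase G F (subv L e j) = H j"
    proof cases
      case 1 then show ?thesis using H sub_ends[OF e] by (simp add: subv0 vcase_base)
    next
      case 2 then show ?thesis using H sub_ends[OF e] by (simp add: subvL[OF e] vcase_base)
    next
      case 3 then show ?thesis using H by (simp add: subvj)
    qed
  qed
  then show "\<exists>H. (\<forall>j. \<bar>H j - H (Suc j)\<bar> \<le> 1) \<and> (\<forall>j\<le>L e. vcase G F (subv L e j) = H j)"
    using H(1) by blast
qed


lemma Tr_Z: "Tr c \<in> Zset k \<longleftrightarrow> 2*m \<le> c \<and> c < 4*m"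
  by (auto simp: Zset_eq)

lemma fl_leaf: "2*m \<le> c \<Longrightarrow> c < 4*m \<Longrightarrow> dep c = k - 1"
  by (rule dep_eqI) (use pow1 pow0 m8 in auto)

lemma fl_par: "2*m \<le> c \<Longrightarrow> c < 4*m \<Longrightarrow> dep (c div 2) = k - 2"
  by (rule dep_eqI) (use pow1 pow0 m8 in \<open>auto simp: m_of_def\<close>)

definition Dp :: "vtx \<Rightarrow> int" where
  "Dp = vcase (\<lambda>v. case v of Tr i \<Rightarrow> int (dep i) | _ \<Rightarrow> int k - 1) (\<lambda>e j. int k - 1)"

lemma Dp_Z: "z \<in> Zset k \<Longrightarrow> Dp z = int k - 1"
  using k5 by (auto simp: Zset_eq Dp_def vcase_def fl_leaf)

lemma Dp_Sub: "Dp (Sub e j) = int k - 1" by (simp add: Dp_def)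

lemma Dp_root: "Dp root = 0" by (simp add: Dp_def root_def vcase_def dep_root)

lemma Dp_pv: "1 \<le> i \<Longrightarrow> i \<le> m \<Longrightarrow> Dp (pv i) = int k - 2"
proof -
  assume i: "1 \<le> i" "i \<le> m"
  have "dep (m + i - 1) = k - 2"
    by (rule dep_eqI) (use i pow1 m8 in \<open>auto simp: m_of_def\<close>)
  then show ?thesis using k5 by (simp add: Dp_def pv_def vcase_def)
qed

lemma Dp_lip: "lip Dp"
  unfolding Dp_def
proof (rule lip_vcase)
  fix i j :: nat assume a: "1 \<le> i" "j = 2*i \<or> j = 2*i+1" "j < 2*m"
  have "dep j = Suc (dep (j div 2))" using a by (intro dep_rec) auto
  moreover have "j div 2 = i" using a by auto
  ultimately show "\<bar>(case Tr i of Tr i \<Rightarrow> int (dep i) | _ \<Rightarrow> int k - 1) -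
                    (case Tr j of Tr i \<Rightarrow> int (dep i) | _ \<Rightarrow> int k - 1)\<bar> \<le> 1" by simp
next
  fix e assume e: "e \<in> sub_edges k"
  let ?G = "\<lambda>v. case v of Tr i \<Rightarrow> int (dep i) | _ \<Rightarrow> int k - 1"
  have GZ: "\<And>z. z \<in> Zset k \<Longrightarrow> ?G z = int k - 1"
    using k5 by (auto simp: Zset_eq fl_leaf)
  show "\<exists>H. (\<forall>j. \<bar>H j - H (Suc j)\<bar> \<le> 1) \<and> ?G (fst e) = H 0 \<and> ?G (snd e) = H (L e) \<and>
            (\<forall>j. 0 < j \<longrightarrow> j < L e \<longrightarrow> int k - 1 = H j)"
    using sub_cases[OF e]
  proof (elim disjE exE conjE)
    fix t assume t: "t < 2*m+1" "e = me t"
    show ?thesis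
      by (rule exI[of _ "\<lambda>j. int k - 1"]) (use t GZ mz_Z[of t] mz_Z[of "t+1"] in \<open>auto simp: me_def\<close>)
  next
    fix c assume c: "2*m \<le> c" "c < 4*m" "e = (Tr (c div 2), Tr c)"
    have "dep (c div 2) = k - 2" using fl_par[OF c(1,2)] by simp
    moreover have "L e > 0" using Lsub[OF e] by simp
    ultimately show ?thesis using c k5 fl_leaf[OF c(1,2)]
      by (intro exI[of _ "\<lambda>j. if j = 0 then int k - 2 else int k - 1"]) auto
  qed
qed

definition gf :: "vtx \<Rightarrow> int" where
  "gf = vcase (\<lambda>v. if v \<in> Zset k then 0 else int l + 1)
     (\<lambda>e j. if fst e \<in> Zset k then 0 else min (int l + 1) (int (L e) - int j))"

lemma gf_lip: "lip gf"
  unfolding gf_def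
proof (rule lip_vcase)
  fix i j :: nat assume a: "1 \<le> i" "j = 2*i \<or> j = 2*i+1" "j < 2*m"
  then show "\<bar>(if Tr i \<in> Zset k then 0 else int l + 1) - (if Tr j \<in> Zset k then 0 else int l + 1)\<bar> \<le> 1"
    by (auto simp: Tr_Z)
next
  fix e assume e: "e \<in> sub_edges k"
  let ?G = "\<lambda>v. if v \<in> Zset k then 0 else int l + 1"
  show "\<exists>H. (\<forall>j. \<bar>H j - H (Suc j)\<bar> \<le> 1) \<and> ?G (fst e) = H 0 \<and> ?G (snd e) = H (L e) \<and>
            (\<forall>j. 0 < j \<longrightarrow> j < L e \<longrightarrow> (if fst e \<in> Zset k then 0 else min (int l + 1) (int (L e) - int j)) = H j)"
    using sub_cases[OF e]
  proof (elim disjE exE conjE)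
    fix t assume t: "t < 2*m+1" "e = me t"
    show ?thesis
      by (rule exI[of _ "\<lambda>j. 0"]) (use t mz_Z[of t] mz_Z[of "t+1"] in \<open>auto simp: me_def\<close>)
  next
    fix c assume c: "2*m \<le> c" "c < 4*m" "e = (Tr (c div 2), Tr c)"
    have nz: "Tr (c div 2) \<notin> Zset k" using c by (auto simp: Tr_Z)
    have "L e \<ge> 2*l+1" using Lsub[OF e] by simp
    then show ?thesis using c nz
      by (intro exI[of _ "\<lambda>j. min (int l + 1) (int (L e) - int j)"]) (auto simp: Tr_Z)
  qed
qed

definition ph :: "vtx \<Rightarrow> vtx \<Rightarrow> int" where
  "ph z = vcase (\<lambda>v. if v = z then 0 else 2 * int l + 1)
     (\<lambda>e j. min (2 * int l + 1) (min (if fst e = z then int j else 2 * int l + 1)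
                                   (if snd e = z then int (L e) - int j else 2 * int l + 1)))"

lemma ph_lip: "z \<in> Zset k \<Longrightarrow> lip (ph z)"
  unfolding ph_def
proof (rule lip_vcase)
  fix i j :: nat assume a: "1 \<le> i" "j = 2*i \<or> j = 2*i+1" "j < 2*m" and z: "z \<in> Zset k"
  have "Tr i \<noteq> z" "Tr j \<noteq> z" using a z by (auto simp: Zset_eq)
  then show "\<bar>(if Tr i = z then 0 else 2 * int l + 1) - (if Tr j = z then 0 else 2 * int l + 1)\<bar> \<le> 1"
    by auto
next
  fix e assume e: "e \<in> sub_edges k"
  have Le: "L e \<ge> 2*l+1" using Lsub[OF e] by simp
  show "\<exists>H. (\<forall>j. \<bar>H j - H (Suc j)\<bar> \<le> 1) \<and> (if fst e = z then 0 else 2 * int l + 1) = H 0 \<and>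
      (if snd e = z then 0 else 2 * int l + 1) = H (L e) \<and>
      (\<forall>j. 0 < j \<longrightarrow> j < L e \<longrightarrow> min (2 * int l + 1) (min (if fst e = z then int j else 2 * int l + 1)
                                   (if snd e = z then int (L e) - int j else 2 * int l + 1)) = H j)"
    by (rule exI[of _ "\<lambda>j. min (2 * int l + 1) (min (if fst e = z then int j else 2 * int l + 1)
                                   (if snd e = z then int (L e) - int j else 2 * int l + 1))"])
       (use Le in \<open>auto simp: min_def abs_if\<close>)
qed

definition ps :: "vtx \<times> vtx \<Rightarrow> nat \<Rightarrow> vtx \<Rightarrow> int" where
  "ps e0 j0 = vcase (\<lambda>v. int l + 1)
     (\<lambda>e j. if e = e0 then min (int l + 1) \<bar>int j - int j0\<bar> else int l + 1)"

lemma ps_lip: "j0 > l \<Longrightarrow> L e0 > j0 + l \<Longrightarrow> lip (ps e0 j0)"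
  unfolding ps_def
proof (rule lip_vcase)
  fix e assume e: "e \<in> sub_edges k" and j0: "j0 > l" "L e0 > j0 + l"
  show "\<exists>H. (\<forall>j. \<bar>H j - H (Suc j)\<bar> \<le> 1) \<and> int l + 1 = H 0 \<and> int l + 1 = H (L e) \<and>
      (\<forall>j. 0 < j \<longrightarrow> j < L e \<longrightarrow> (if e = e0 then min (int l + 1) \<bar>int j - int j0\<bar> else int l + 1) = H j)"
    by (rule exI[of _ "\<lambda>j. if e = e0 then min (int l + 1) \<bar>int j - int j0\<bar> else int l + 1"])
       (use j0 in \<open>auto simp: min_def abs_if\<close>)
qed simp


lemma mz_eq_iff: "s \<le> 2*m+1 \<Longrightarrow> t \<le> 2*m+1 \<Longrightarrow> mz s = mz t \<longleftrightarrow> s = t"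
  using mz_inj by blast

lemma pv_notZ: "1 \<le> i \<Longrightarrow> i \<le> m \<Longrightarrow> pv i \<notin> Zset k"
  by (auto simp: pv_def Tr_Z)

lemma mz_not_Sub: "t \<le> 2*m+1 \<Longrightarrow> mz t \<noteq> Sub e j"
  using mz_Z Z_not_Sub by blast

lemma mz_not_Sub': "t \<le> 2*m+1 \<Longrightarrow> Sub e j \<noteq> mz t"
  using mz_not_Sub by metis

lemma me_ne_ll: "t \<le> 2*m \<Longrightarrow> 1 \<le> i \<Longrightarrow> i \<le> m \<Longrightarrow> me t \<noteq> ll i \<and> me t \<noteq> lr i"
  using mz_Z[of t] pv_notZ[of i] by (auto simp: me_def ll_def lr_def)

lemma me_inj: "s \<le> 2*m \<Longrightarrow> t \<le> 2*m \<Longrightarrow> me s = me t \<longleftrightarrow> s = t"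
  using mz_inj[of s t] by (auto simp: me_def)

lemma lam_ne_rho: "lam k i \<noteq> rho k j" by (simp add: lam_def rho_def) presburger

lemma ll_ne_lr: "ll i \<noteq> lr j" using lam_ne_rho by (simp add: ll_def lr_def)

lemma pv_Sub: "pv i \<noteq> Sub e j" by (simp add: pv_def)

definition seg :: "vtx \<times> vtx \<Rightarrow> vtx list" where "seg e = map (subv L e) [0..<L e]"
definition Mo :: "nat \<Rightarrow> nat \<Rightarrow> vtx list" where "Mo a b = concat (map (\<lambda>t. seg (me t)) [a..<b])"
definition J :: "nat \<Rightarrow> vtx list" where
  "J i = rev (map (subv L (ll i)) [1..<L (ll i) + 1]) @ map (subv L (lr i)) [0..<L (lr i)]"

definition Mset :: "nat \<Rightarrow> nat \<Rightarrow> vtx set" where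
  "Mset a b = {mz t | t. a \<le> t \<and> t < b} \<union> {Sub (me t) j | t j. a \<le> t \<and> t < b \<and> 0 < j \<and> j < L (me t)}"
definition Jset :: "nat \<Rightarrow> vtx set" where
  "Jset i = {lam k i, pv i} \<union> {Sub (ll i) j | j. 0 < j \<and> j < L (ll i)} \<union> {Sub (lr i) j | j. 0 < j \<and> j < L (lr i)}"

lemma set_seg: "set (seg e) \<subseteq> {fst e} \<union> {Sub e j | j. 0 < j \<and> j < L e}"
  by (auto simp: seg_def subv_def)

lemma set_Mo: "set (Mo a b) \<subseteq> Mset a b"
proof
  fix v assume "v \<in> set (Mo a b)"
  then obtain t where t: "a \<le> t" "t < b" "v \<in> set (seg (me t))" by (auto simp: Mo_def)
  then show "v \<in> Mset a b" using set_seg[of "me t"] by (auto simp: Mset_def me_def)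
qed

lemma set_J: "1 \<le> i \<Longrightarrow> i \<le> m \<Longrightarrow> set (J i) \<subseteq> Jset i"
proof
  fix v assume i: "1 \<le> i" "i \<le> m" and v: "v \<in> set (J i)"
  have L1: "L (ll i) \<ge> 1" "L (lr i) \<ge> 1" using Lsub[OF ll_sub[OF i]] Lsub[OF lr_sub[OF i]] by auto
  show "v \<in> Jset i" using v L1 by (auto simp: J_def Jset_def subv_def ll_def lr_def)
qed

lemma distinct_seg: "(\<And>j. fst e \<noteq> Sub e j) \<Longrightarrow> distinct (seg e)"
  unfolding seg_def by (rule distinct_map[THEN iffD2]) (auto simp: inj_on_def subv_def; metis)

lemma Mo_Suc: "a \<le> b \<Longrightarrow> Mo a (Suc b) = Mo a b @ seg (me b)"
  by (simp add: Mo_def)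

lemma distinct_Mo: "b \<le> 2*m+1 \<Longrightarrow> distinct (Mo a b)"
proof (induction b)
  case 0 then show ?case by (simp add: Mo_def)
next
  case (Suc b)
  show ?case
  proof (cases "a \<le> b")
    case False then show ?thesis by (simp add: Mo_def)
  next
    case True
    have d1: "distinct (seg (me b))" using Suc.prems mz_not_Sub[of b] by (intro distinct_seg) (auto simp: me_def)
    have "set (Mo a b) \<inter> set (seg (me b)) = {}"
    proof -
      have "Mset a b \<inter> ({fst (me b)} \<union> {Sub (me b) j | j. 0 < j \<and> j < L (me b)}) = {}"
        using Suc.prems by (auto simp: Mset_def me_def mz_eq_iff mz_not_Sub mz_not_Sub' me_inj)
      then show ?thesis using set_Mo[of a b] set_seg[of "me b"] by blast
    qed
    then show ?thesis using Suc d1 True by (simp add: Mo_Suc)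
  qed
qed

lemma distinct_J: "1 \<le> i \<Longrightarrow> i \<le> m \<Longrightarrow> distinct (J i)"
proof -
  assume i: "1 \<le> i" "i \<le> m"
  have L1: "L (ll i) \<ge> 1" "L (lr i) \<ge> 1" using Lsub[OF ll_sub[OF i]] Lsub[OF lr_sub[OF i]] by auto
  have "lam k i \<noteq> pv i" using i m8 by (simp add: lam_Tr pv_def)
  have a: "distinct (map (subv L (ll i)) [1..<L (ll i) + 1])"
    by (rule distinct_map[THEN iffD2]) (auto simp: inj_on_def subv_def ll_def lam_def)
  have b: "distinct (map (subv L (lr i)) [0..<L (lr i)])"
    using distinct_seg[of "lr i"] by (simp add: seg_def lr_def pv_def)
  have c: "set (map (subv L (ll i)) [1..<L (ll i) + 1]) \<inter> set (map (subv L (lr i)) [0..<L (lr i)]) = {}"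
    using L1 \<open>lam k i \<noteq> pv i\<close> ll_ne_lr[of i i] by (auto simp: subv_def ll_def lr_def lam_def pv_def)
  show ?thesis using a b c by (simp add: J_def)
qed


lemma adj_sym: "adj k L x y = adj k L y x" by (auto simp: adj_def)

lemma adj_sub: "e \<in> sub_edges k \<Longrightarrow> j < L e \<Longrightarrow> adj k L (subv L e j) (subv L e (Suc j))"
proof -
  assume "e \<in> sub_edges k" "j < L e"
  then have "(subv L e j, subv L e (Suc j)) \<in> {(subv L e j, subv L e (j + 1)) |e j. e \<in> sub_edges k \<and> j < L e}"
    by (intro CollectI exI[of _ e] exI[of _ j]) simp
  then show ?thesis unfolding adj_def GE_def by blast
qed

lemma succ_upt: "(\<And>j. a \<le> j \<Longrightarrow> Suc j < b \<Longrightarrow> P j (Suc j)) \<Longrightarrow> successively P [a..<b]"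
  unfolding succ_nth by (auto simp: nth_upt add.commute)

lemma chain_sub: "e \<in> sub_edges k \<Longrightarrow> b \<le> L e + 1 \<Longrightarrow> successively (adj k L) (map (subv L e) [a..<b])"
  unfolding successively_map by (rule succ_upt) (auto intro: adj_sub)

lemma glue: "successively P (xs @ [y]) \<Longrightarrow> successively P (y # ys) \<Longrightarrow> successively P (xs @ y # ys)"
  by (cases "xs = []") (auto simp: successively_append_iff)

lemma seg_snoc: "e \<in> sub_edges k \<Longrightarrow> seg e @ [snd e] = map (subv L e) [0..<L e + 1]"
  by (simp add: seg_def subvL)

lemma seg_hd: "e \<in> sub_edges k \<Longrightarrow> \<exists>R. seg e = fst e # R"
proof -
  assume e: "e \<in> sub_edges k"
  have "L e \<ge> 1" using Lsub[OF e] by simp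
  then have "[0..<L e] = 0 # [1..<L e]" by (simp add: upt_conv_Cons)
  then show ?thesis by (simp add: seg_def subv0)
qed

lemma Mo_hd: "a < b \<Longrightarrow> b \<le> 2*m+1 \<Longrightarrow> \<exists>R. Mo a b = mz a # R"
proof -
  assume ab: "a < b" "b \<le> 2*m+1"
  have "[a..<b] = a # [Suc a..<b]" using ab by (simp add: upt_conv_Cons)
  moreover obtain R where "seg (me a) = mz a # R" using seg_hd[OF me_sub[of a]] ab by (auto simp: me_def)
  ultimately show ?thesis by (simp add: Mo_def)
qed

lemma Mo_snoc_hd: "a \<le> b \<Longrightarrow> b \<le> 2*m+1 \<Longrightarrow> \<exists>R. Mo a b @ [mz b] = mz a # R"
proof (cases "a = b")
  case True then show ?thesis by (simp add: Mo_def)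
next
  case False
  assume "a \<le> b" "b \<le> 2*m+1"
  then obtain R where "Mo a b = mz a # R" using Mo_hd False by fastforce
  then show ?thesis by simp
qed

lemma chain_Mo: "a \<le> b \<Longrightarrow> b \<le> 2*m+1 \<Longrightarrow> successively (adj k L) (Mo a b @ [mz b])"
proof (induction b rule: dec_induct)
  case base then show ?case by (simp add: Mo_def)
next
  case (step n)
  have e: "me n \<in> sub_edges k" using step by (intro me_sub) auto
  have eqm: "map (subv L (me n)) [0..<L (me n) + 1] = mz n # map (subv L (me n)) [1..<L (me n) + 1]"
    using Lsub[OF e] by (simp add: upt_conv_Cons subv0 me_def del: upt_Suc)
  have "Mo a (Suc n) @ [mz (Suc n)] = Mo a n @ (seg (me n) @ [snd (me n)])"
    using step by (simp add: Mo_Suc me_def)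
  also have "\<dots> = Mo a n @ map (subv L (me n)) [0..<L (me n) + 1]" by (simp add: seg_snoc[OF e])
  also have "\<dots> = Mo a n @ mz n # map (subv L (me n)) [1..<L (me n) + 1]" by (simp only: eqm)
  finally have eq: "Mo a (Suc n) @ [mz (Suc n)] = Mo a n @ mz n # map (subv L (me n)) [1..<L (me n) + 1]" .
  have "successively (adj k L) (map (subv L (me n)) [0..<L (me n) + 1])" by (rule chain_sub[OF e]) simp
  then have c2: "successively (adj k L) (mz n # map (subv L (me n)) [1..<L (me n) + 1])"
    by (simp only: eqm)
  have c1: "successively (adj k L) (Mo a n @ [mz n])" using step.IH step.prems by simp
  show ?case unfolding eq by (rule glue[OF c1 c2])
qed

lemma chain_J: "1 \<le> i \<Longrightarrow> i \<le> m \<Longrightarrow> successively (adj k L) (J i @ [rho k i])"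
proof -
  assume i: "1 \<le> i" "i \<le> m"
  note e1 = ll_sub[OF i] and e2 = lr_sub[OF i]
  have a: "rev (map (subv L (ll i)) [1..<L (ll i) + 1]) @ [pv i] = rev (map (subv L (ll i)) [0..<L (ll i) + 1])"
    using Lsub[OF e1] by (simp add: upt_conv_Cons subv0 ll_def)
  have eqb: "map (subv L (lr i)) [0..<L (lr i) + 1] = pv i # map (subv L (lr i)) [1..<L (lr i) + 1]"
    using Lsub[OF e2] by (simp add: upt_conv_Cons subv0 lr_def del: upt_Suc)
  have b: "map (subv L (lr i)) [0..<L (lr i)] @ [rho k i] = pv i # map (subv L (lr i)) [1..<L (lr i) + 1]"
    using seg_snoc[OF e2] eqb by (simp add: seg_def lr_def)
  have ca: "successively (adj k L) (rev (map (subv L (ll i)) [1..<L (ll i) + 1]) @ [pv i])"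
  proof -
    have sy: "(\<lambda>x y. adj k L y x) = adj k L" using adj_sym by (intro ext) blast
    have ch: "successively (adj k L) (map (subv L (ll i)) [0..<L (ll i) + 1])" by (rule chain_sub[OF e1]) simp
    show ?thesis unfolding a successively_rev sy by (rule ch)
  qed
  have "successively (adj k L) (map (subv L (lr i)) [0..<L (lr i) + 1])" by (rule chain_sub[OF e2]) simp
  then have cb: "successively (adj k L) (pv i # map (subv L (lr i)) [1..<L (lr i) + 1])"
    by (simp only: eqb)
  have "J i @ [rho k i] = rev (map (subv L (ll i)) [1..<L (ll i) + 1]) @ pv i # map (subv L (lr i)) [1..<L (lr i) + 1]"
    using b by (simp add: J_def)
  then show ?thesis using glue[OF ca cb] by simp
qed

lemma J_hd: "1 \<le> i \<Longrightarrow> i \<le> m \<Longrightarrow> \<exists>R. J i = lam k i # R"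
proof -
  assume i: "1 \<le> i" "i \<le> m"
  have "L (ll i) \<ge> 1" using Lsub[OF ll_sub[OF i]] by simp
  then have "[1..<L (ll i) + 1] = [1..<L (ll i)] @ [L (ll i)]" by simp
  then have "rev (map (subv L (ll i)) [1..<L (ll i) + 1]) = lam k i # rev (map (subv L (ll i)) [1..<L (ll i)])"
    using subvL[OF ll_sub[OF i]] by (simp add: ll_def)
  then show ?thesis by (simp add: J_def)
qed

lemma is_pathI: "xs \<noteq> [] \<Longrightarrow> distinct xs \<Longrightarrow> set xs \<subseteq> GV k L \<Longrightarrow> successively (adj k L) xs \<Longrightarrow> is_path k L xs"
  unfolding is_path_def succ_nth by auto

lemma Z_GV: "Zset k \<subseteq> GV k L"
  by (auto simp: GV_def Zset_eq tv_eq)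

lemma Mset_GV: "b \<le> 2*m+1 \<Longrightarrow> Mset a b \<subseteq> GV k L"
proof
  fix v assume b: "b \<le> 2*m+1" and v: "v \<in> Mset a b"
  show "v \<in> GV k L" using v
  proof (unfold Mset_def, elim UnE CollectE exE conjE)
    fix t assume "v = mz t" "a \<le> t" "t < b"
    then show ?thesis using mz_Z[of t] Z_GV b by auto
  next
    fix t j assume "v = Sub (me t) j" "a \<le> t" "t < b" "0 < j" "j < L (me t)"
    then have "v \<in> {Sub e j |e j. e \<in> sub_edges k \<and> 1 \<le> j \<and> j < L e}"
      using me_sub[of t] b by (intro CollectI exI[of _ "me t"] exI[of _ j]) auto
    then show ?thesis unfolding GV_def by blast
  qed
qed

lemma Jset_GV: "1 \<le> i \<Longrightarrow> i \<le> m \<Longrightarrow> Jset i \<subseteq> GV k L"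
proof -
  assume i: "1 \<le> i" "i \<le> m"
  have "lam k i \<in> GV k L" using lam_mz[OF i] mz_Z[of "2*i-2"] Z_GV i by auto
  moreover have "pv i \<in> GV k L"
  proof -
    have "Tr (m+i-1) \<in> Tr ` {1..<4*m}" using i m8 by (intro imageI) auto
    then show ?thesis by (simp add: GV_def tv_eq pv_def)
  qed
  moreover have "{Sub (ll i) j | j. 0 < j \<and> j < L (ll i)} \<union> {Sub (lr i) j | j. 0 < j \<and> j < L (lr i)}
      \<subseteq> {Sub e j |e j. e \<in> sub_edges k \<and> 1 \<le> j \<and> j < L e}"
  proof -
    { fix e j assume "e \<in> sub_edges k" "0 < j" "j < L e"
      then have "Sub e j \<in> {Sub e j |e j. e \<in> sub_edges k \<and> 1 \<le> j \<and> j < L e}"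
        by (intro CollectI exI[of _ e] exI[of _ j]) auto }
    then show ?thesis using ll_sub[OF i] lr_sub[OF i] by blast
  qed
  ultimately show ?thesis unfolding Jset_def GV_def by blast
qed


lemma mz_Mset: "b \<le> 2*m+1 \<Longrightarrow> s \<le> 2*m+1 \<Longrightarrow> mz s \<in> Mset a b \<longleftrightarrow> a \<le> s \<and> s < b"
  unfolding Mset_def using mz_not_Sub by (auto simp: mz_eq_iff)

lemma mz_Jset: "s \<le> 2*m+1 \<Longrightarrow> 1 \<le> i \<Longrightarrow> i \<le> m \<Longrightarrow> mz s \<in> Jset i \<longleftrightarrow> s = 2*i-2"
proof -
  assume a: "s \<le> 2*m+1" "1 \<le> i" "i \<le> m"
  have "mz s \<noteq> pv i" using pv_notZ[of i] mz_Z[of s] a by auto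
  moreover have "2*i-2 \<le> 2*m+1" using a by simp
  ultimately show ?thesis unfolding Jset_def lam_mz[OF a(2,3)] using mz_not_Sub a by (auto simp: mz_eq_iff)
qed

lemma mz_ne_pv: "t \<le> 2*m+1 \<Longrightarrow> 1 \<le> i \<Longrightarrow> i \<le> m \<Longrightarrow> mz t \<noteq> pv i"
  using pv_notZ[of i] mz_Z[of t] by auto

lemma Mset_disj: "b \<le> c \<Longrightarrow> d \<le> 2*m+1 \<Longrightarrow> Mset a b \<inter> Mset c d = {}"
  unfolding Mset_def by (auto simp: mz_eq_iff me_inj mz_not_Sub mz_not_Sub')

lemma MsetE: "v \<in> Mset a b \<Longrightarrow> (\<And>t. a \<le> t \<Longrightarrow> t < b \<Longrightarrow> v = mz t \<Longrightarrow> P) \<Longrightarrow>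
   (\<And>t j. a \<le> t \<Longrightarrow> t < b \<Longrightarrow> 0 < j \<Longrightarrow> j < L (me t) \<Longrightarrow> v = Sub (me t) j \<Longrightarrow> P) \<Longrightarrow> P"
  unfolding Mset_def by blast

lemma pv_Mset: "b \<le> 2*m+1 \<Longrightarrow> 1 \<le> i \<Longrightarrow> i \<le> m \<Longrightarrow> pv i \<notin> Mset a b"
proof
  assume a: "b \<le> 2*m+1" "1 \<le> i" "i \<le> m" "pv i \<in> Mset a b"
  show False using a(4)
  proof (rule MsetE)
    fix t assume "t < b" "pv i = mz t"
    then show False using mz_ne_pv[of t i] a by simp
  next
    fix t j assume "pv i = Sub (me t) j" then show False by (simp add: pv_Sub)
  qed
qed

lemma llSub_Mset: "b \<le> 2*m+1 \<Longrightarrow> 1 \<le> i \<Longrightarrow> i \<le> m \<Longrightarrow> Sub (ll i) j \<notin> Mset a b \<and> Sub (lr i) j \<notin> Mset a b"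
proof -
  assume a: "b \<le> 2*m+1" "1 \<le> i" "i \<le> m"
  have "Sub e j \<notin> Mset a b" if e: "e = ll i \<or> e = lr i" for e
  proof
    assume "Sub e j \<in> Mset a b"
    then show False
    proof (rule MsetE)
      fix t assume "t < b" "Sub e j = mz t"
      then show False using mz_not_Sub'[of t e j] a by simp
    next
      fix t j' assume "t < b" "Sub e j = Sub (me t) j'"
      then have "e = me t" by simp
      then show False using me_ne_ll[of t i] a e \<open>t < b\<close> by auto
    qed
  qed
  then show ?thesis by blast
qed

lemma Mset_Jset: "b \<le> 2*m+1 \<Longrightarrow> 1 \<le> i \<Longrightarrow> i \<le> m \<Longrightarrow> \<not>(a \<le> 2*i-2 \<and> 2*i-2 < b) \<Longrightarrow> Mset a b \<inter> Jset i = {}"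
proof -
  assume a: "b \<le> 2*m+1" "1 \<le> i" "i \<le> m" "\<not>(a \<le> 2*i-2 \<and> 2*i-2 < b)"
  have "lam k i \<notin> Mset a b" using lam_mz[OF a(2,3)] mz_Mset[of b "2*i-2" a] a by simp
  then show ?thesis unfolding Jset_def using pv_Mset[OF a(1-3)] llSub_Mset[OF a(1-3)] by blast
qed

definition good :: "vtx list \<Rightarrow> bool" where
  "good P \<longleftrightarrow> is_path k L P \<and> hd P \<in> {root, lam k 1, S2} \<and> last P \<in> {root, T1, rho k m}
     \<and> (\<forall>v \<in> set P. Dp v \<ge> int k - 2)"

lemma Dp_Mset: "b \<le> 2*m+1 \<Longrightarrow> v \<in> Mset a b \<Longrightarrow> Dp v = int k - 1"
  unfolding Mset_def using mz_Z Dp_Z by (auto simp: Dp_Sub)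

lemma Dp_Jset: "1 \<le> i \<Longrightarrow> i \<le> m \<Longrightarrow> v \<in> Jset i \<Longrightarrow> Dp v \<ge> int k - 2"
proof -
  assume a: "1 \<le> i" "i \<le> m" "v \<in> Jset i"
  have "Dp (lam k i) = int k - 1" using lam_mz[OF a(1,2)] mz_Z[of "2*i-2"] Dp_Z a by simp
  then show ?thesis using a Dp_pv unfolding Jset_def by (auto simp: Dp_Sub)
qed

lemma good_M: "a < b \<Longrightarrow> b \<le> 2*m+1 \<Longrightarrow> a \<le> 1 \<Longrightarrow> 2*m \<le> b \<Longrightarrow>
   good (Mo a b @ [mz b]) \<and> set (Mo a b @ [mz b]) \<subseteq> Mset a b \<union> {mz b}"
proof -
  assume ab: "a < b" "b \<le> 2*m+1" "a \<le> 1" "2*m \<le> b"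
  have st: "set (Mo a b @ [mz b]) \<subseteq> Mset a b \<union> {mz b}" using set_Mo[of a b] by auto
  have "mz b \<notin> Mset a b" using mz_Mset[of b b a] ab by simp
  then have d: "distinct (Mo a b @ [mz b])" using distinct_Mo[of b a] set_Mo[of a b] ab by auto
  have gv: "set (Mo a b @ [mz b]) \<subseteq> GV k L" using st Mset_GV[of b a] mz_Z[of b] Z_GV ab by auto
  have ch: "successively (adj k L) (Mo a b @ [mz b])" using chain_Mo ab by simp
  have p: "is_path k L (Mo a b @ [mz b])" using d gv ch by (intro is_pathI) auto
  obtain R where R: "Mo a b @ [mz b] = mz a # R" using Mo_snoc_hd[of a b] ab by auto
  have h: "hd (Mo a b @ [mz b]) \<in> {root, lam k 1, S2}"
    unfolding R using ab by (cases a) (auto simp: mz_0 mz_1')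
  have "b = 2*m \<or> b = 2*m+1" using ab by linarith
  then have lst: "last (Mo a b @ [mz b]) \<in> {root, T1, rho k m}"
    by (auto simp: mz_2m mz_last')
  have "\<forall>v \<in> set (Mo a b @ [mz b]). Dp v \<ge> int k - 2"
    using st Dp_Mset[of b _ a] Dp_Z[OF mz_Z[of b]] ab by fastforce
  then show ?thesis using p h lst st unfolding good_def by blast
qed

definition PJ :: "nat \<Rightarrow> vtx list" where
  "PJ i = Mo 0 (2*i-2) @ J i @ Mo (2*i+1) (2*m+1) @ [mz (2*m+1)]"

lemma good_J: "1 \<le> i \<Longrightarrow> i \<le> m \<Longrightarrow>
   good (PJ i) \<and> set (PJ i) \<subseteq> Mset 0 (2*i-2) \<union> Jset i \<union> Mset (2*i+1) (2*m+1) \<union> {mz (2*m+1)}"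
proof -
  assume i: "1 \<le> i" "i \<le> m"
  let ?A = "Mo 0 (2*i-2)" and ?B = "J i" and ?C = "Mo (2*i+1) (2*m+1)" and ?D = "[mz (2*m+1)]"
  have sA: "set ?A \<subseteq> Mset 0 (2*i-2)" and sB: "set ?B \<subseteq> Jset i" and sC: "set ?C \<subseteq> Mset (2*i+1) (2*m+1)"
    using set_Mo set_J[OF i] by auto
  have st: "set (PJ i) \<subseteq> Mset 0 (2*i-2) \<union> Jset i \<union> Mset (2*i+1) (2*m+1) \<union> {mz (2*m+1)}"
    unfolding PJ_def using sA sB sC by auto
  have dA: "distinct ?A" and dB: "distinct ?B" and dC: "distinct ?C"
    using distinct_Mo[of "2*i-2" 0] distinct_Mo[of "2*m+1" "2*i+1"] distinct_J[OF i] i by auto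
  have AB: "Mset 0 (2*i-2) \<inter> Jset i = {}" using Mset_Jset[of "2*i-2" i 0] i by auto
  have AC: "Mset 0 (2*i-2) \<inter> Mset (2*i+1) (2*m+1) = {}" using Mset_disj[of "2*i-2" "2*i+1" "2*m+1" 0] by auto
  have BC: "Mset (2*i+1) (2*m+1) \<inter> Jset i = {}" using Mset_Jset[of "2*m+1" i "2*i+1"] i by auto
  have xD: "mz (2*m+1) \<notin> Mset 0 (2*i-2)" "mz (2*m+1) \<notin> Jset i" "mz (2*m+1) \<notin> Mset (2*i+1) (2*m+1)"
    using mz_Mset[of "2*i-2" "2*m+1" 0] mz_Jset[of "2*m+1" i] mz_Mset[of "2*m+1" "2*m+1" "2*i+1"] i by auto
  have d: "distinct (PJ i)" unfolding PJ_def using dA dB dC sA sB sC AB AC BC xD by auto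
  have "Mset 0 (2*i-2) \<subseteq> GV k L" "Mset (2*i+1) (2*m+1) \<subseteq> GV k L" using Mset_GV i by simp_all
  then have gv: "set (PJ i) \<subseteq> GV k L"
    using st Jset_GV[OF i] mz_Z[of "2*m+1"] Z_GV i by auto
  obtain RC where RC: "?C @ ?D = mz (2*i+1) # RC" using Mo_snoc_hd[of "2*i+1" "2*m+1"] i by auto
  have cC: "successively (adj k L) (?C @ ?D)" using chain_Mo[of "2*i+1" "2*m+1"] i by simp
  have cB: "successively (adj k L) (?B @ [mz (2*i+1)])" using chain_J[OF i] rho_mz[OF i] by simp
  have cBC: "successively (adj k L) (?B @ ?C @ ?D)" using glue[OF cB, of RC] cC unfolding RC by simp
  obtain RB where RB: "?B = lam k i # RB" using J_hd[OF i] by auto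
  have cA: "successively (adj k L) (?A @ [lam k i])" using chain_Mo[of 0 "2*i-2"] lam_mz[OF i] i by simp
  have cABC: "successively (adj k L) (?A @ ?B @ ?C @ ?D)"
    using glue[OF cA, of "RB @ ?C @ ?D"] cBC unfolding RB by simp
  have p: "is_path k L (PJ i)" using d gv cABC unfolding PJ_def by (intro is_pathI) auto
  have h: "hd (PJ i) = lam k 1"
  proof (cases "i = 1")
    case True then show ?thesis unfolding PJ_def RB by (simp add: Mo_def)
  next
    case False
    have "0 < 2*i-2" "2*i-2 \<le> 2*m+1" using False i by auto
    then obtain R where "?A = mz 0 # R" using Mo_hd[of 0 "2*i-2"] by blast
    then show ?thesis unfolding PJ_def by (simp add: mz_0)
  qed
  have lst: "last (PJ i) = rho k m" unfolding PJ_def by (simp add: mz_last')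
  have "\<forall>v \<in> set (PJ i). Dp v \<ge> int k - 2"
  proof
    fix v assume "v \<in> set (PJ i)"
    then consider "v \<in> Mset 0 (2*i-2)" | "v \<in> Jset i" | "v \<in> Mset (2*i+1) (2*m+1)" | "v = mz (2*m+1)"
      using st by blast
    then show "Dp v \<ge> int k - 2"
    proof cases
      case 1 then show ?thesis using Dp_Mset[of "2*i-2" v 0] i by simp
    next
      case 2 then show ?thesis using Dp_Jset[OF i] by simp
    next
      case 3 then show ?thesis using Dp_Mset[of "2*m+1" v "2*i+1"] by simp
    next
      case 4 then show ?thesis using Dp_Z[OF mz_Z[of "2*m+1"]] by simp
    qed
  qed
  then show ?thesis using p h lst st unfolding good_def by simp
qed


lemma base_val: "(\<And>e j. v \<noteq> Sub e j) \<Longrightarrow> vcase G F v = G v" by (rule vcase_base)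

lemma mz_vcase: "t \<le> 2*m+1 \<Longrightarrow> vcase G F (mz t) = G (mz t)"
  using mz_not_Sub by (intro vcase_base) blast

lemma far_all: "lip f \<Longrightarrow> (\<forall>v \<in> set P. \<bar>f y - f v\<bar> > int l) \<Longrightarrow> \<forall>v \<in> set P. \<not> dist_le k L y v l"
  using far by blast

lemma K1: "gf y = int l + 1 \<Longrightarrow> \<exists>P. good P \<and> (\<forall>v \<in> set P. \<not> dist_le k L y v l)"
proof -
  assume y: "gf y = int l + 1"
  have g: "good (Mo 0 (2*m+1) @ [mz (2*m+1)])" and st: "set (Mo 0 (2*m+1) @ [mz (2*m+1)]) \<subseteq> Mset 0 (2*m+1) \<union> {mz (2*m+1)}"
    using good_M[of 0 "2*m+1"] by auto
  have "\<forall>v \<in> set (Mo 0 (2*m+1) @ [mz (2*m+1)]). gf v = 0"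
  proof
    fix v assume "v \<in> set (Mo 0 (2*m+1) @ [mz (2*m+1)])"
    then have "v \<in> Mset 0 (2*m+1) \<or> v = mz (2*m+1)" using st by blast
    then show "gf v = 0"
    proof (elim disjE)
      assume "v \<in> Mset 0 (2*m+1)"
      then show ?thesis
      proof (rule MsetE)
        fix t assume "t < 2*m+1" "v = mz t"
        then show ?thesis using mz_Z[of t] by (simp add: gf_def mz_vcase)
      next
        fix t j assume "t < 2*m+1" "v = Sub (me t) j"
        then show ?thesis using mz_Z[of t] by (simp add: gf_def me_def)
      qed
    next
      assume "v = mz (2*m+1)"
      then show ?thesis using mz_Z[of "2*m+1"] by (simp add: gf_def mz_vcase)
    qed
  qed
  then have "\<forall>v \<in> set (Mo 0 (2*m+1) @ [mz (2*m+1)]). \<not> dist_le k L y v l"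
    using y by (intro far_all[OF gf_lip]) auto
  then show ?thesis using g by blast
qed

lemma ph_mz: "t \<le> 2*m+1 \<Longrightarrow> t0 \<le> 2*m+1 \<Longrightarrow> t \<noteq> t0 \<Longrightarrow> ph (mz t0) (mz t) = 2 * int l + 1"
  by (simp add: ph_def mz_vcase mz_eq_iff)

lemma ph_M: "v \<in> Mset a b \<Longrightarrow> b \<le> 2*m+1 \<Longrightarrow> t0 \<le> 2*m+1 \<Longrightarrow> t0 < a \<or> b < t0 \<Longrightarrow> ph (mz t0) v = 2 * int l + 1"
proof -
  assume a: "v \<in> Mset a b" "b \<le> 2*m+1" "t0 \<le> 2*m+1" "t0 < a \<or> b < t0"
  show ?thesis using a(1)
  proof (rule MsetE)
    fix t assume "a \<le> t" "t < b" "v = mz t"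
    then show ?thesis using a ph_mz[of t t0] by auto
  next
    fix t j assume t: "a \<le> t" "t < b" "v = Sub (me t) j"
    have "mz t \<noteq> mz t0" "mz (Suc t) \<noteq> mz t0" using t a by (auto simp: mz_eq_iff)
    then show ?thesis using t by (simp add: ph_def me_def)
  qed
qed

lemma ph_J: "1 \<le> i \<Longrightarrow> i \<le> m \<Longrightarrow> t0 \<le> 2*m+1 \<Longrightarrow> t0 \<noteq> 2*i-2 \<Longrightarrow> t0 \<noteq> 2*i+1 \<Longrightarrow> v \<in> Jset i
   \<Longrightarrow> ph (mz t0) v = 2 * int l + 1"
proof -
  assume a: "1 \<le> i" "i \<le> m" "t0 \<le> 2*m+1" "t0 \<noteq> 2*i-2" "t0 \<noteq> 2*i+1" "v \<in> Jset i"
  have l1: "lam k i \<noteq> mz t0" using lam_mz[OF a(1,2)] a by (simp add: mz_eq_iff)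
  have r1: "rho k i \<noteq> mz t0" using rho_mz[OF a(1,2)] a by (simp add: mz_eq_iff)
  have p1: "pv i \<noteq> mz t0" using mz_ne_pv[of t0 i] a by metis
  have "ph (mz t0) (lam k i) = 2 * int l + 1" using lam_mz[OF a(1,2)] a ph_mz[of "2*i-2" t0] by simp
  moreover have "ph (mz t0) (pv i) = 2 * int l + 1" using p1 by (simp add: ph_def vcase_base pv_Sub)
  moreover have "\<And>j. ph (mz t0) (Sub (ll i) j) = 2 * int l + 1" using p1 l1 by (simp add: ph_def ll_def)
  moreover have "\<And>j. ph (mz t0) (Sub (lr i) j) = 2 * int l + 1" using p1 r1 by (simp add: ph_def lr_def)
  ultimately show ?thesis using a(6) unfolding Jset_def by blast
qed

lemma K2: "t0 \<le> 2*m+1 \<Longrightarrow> \<exists>P. good P \<and> (\<forall>v \<in> set P. ph (mz t0) v = 2 * int l + 1)"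
proof -
  assume t0: "t0 \<le> 2*m+1"
  consider "t0 = 0" | "t0 = 2*m+1" | "1 \<le> t0 \<and> t0 \<le> 2*m" using t0 by linarith
  then show ?thesis
  proof cases
    case 1
    have g: "good (Mo 1 (2*m+1) @ [mz (2*m+1)]) \<and> set (Mo 1 (2*m+1) @ [mz (2*m+1)]) \<subseteq> Mset 1 (2*m+1) \<union> {mz (2*m+1)}"
      using good_M[of 1 "2*m+1"] m8 by auto
    have "\<forall>v \<in> set (Mo 1 (2*m+1) @ [mz (2*m+1)]). ph (mz t0) v = 2 * int l + 1"
      using g ph_M[of _ 1 "2*m+1" t0] ph_mz[of "2*m+1" t0] 1 by auto
    then show ?thesis using g by blast
  next
    case 2
    have g: "good (Mo 0 (2*m) @ [mz (2*m)]) \<and> set (Mo 0 (2*m) @ [mz (2*m)]) \<subseteq> Mset 0 (2*m) \<union> {mz (2*m)}"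
      using good_M[of 0 "2*m"] m8 by auto
    have "\<forall>v \<in> set (Mo 0 (2*m) @ [mz (2*m)]). ph (mz t0) v = 2 * int l + 1"
      using g ph_M[of _ 0 "2*m" t0] ph_mz[of "2*m" t0] 2 by auto
    then show ?thesis using g by blast
  next
    case 3
    define i where "i = (t0 + 1) div 2"
    have i: "1 \<le> i" "i \<le> m" "t0 = 2*i-1 \<or> t0 = 2*i" using 3 unfolding i_def by presburger+
    have g: "good (PJ i)" and st: "set (PJ i) \<subseteq> Mset 0 (2*i-2) \<union> Jset i \<union> Mset (2*i+1) (2*m+1) \<union> {mz (2*m+1)}"
      using good_J[OF i(1,2)] by auto
    have "\<forall>v \<in> set (PJ i). ph (mz t0) v = 2 * int l + 1"
    proof
      fix v assume "v \<in> set (PJ i)"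
      then consider "v \<in> Mset 0 (2*i-2)" | "v \<in> Jset i" | "v \<in> Mset (2*i+1) (2*m+1)" | "v = mz (2*m+1)"
        using st by blast
      then show "ph (mz t0) v = 2 * int l + 1"
      proof cases
        case 1 then show ?thesis using ph_M[of v 0 "2*i-2" t0] i 3 by auto
      next
        case 2 then show ?thesis using ph_J[OF i(1,2), of t0 v] i 3 by auto
      next
        case 3 then show ?thesis using ph_M[of v "2*i+1" "2*m+1" t0] i t0 by auto
      next
        case 4 then show ?thesis using ph_mz[of "2*m+1" t0] 3 by auto
      qed
    qed
    then show ?thesis using g by blast
  qed
qed

lemma noSub_M: "v \<in> Mset a b \<Longrightarrow> b \<le> 2*m+1 \<Longrightarrow> t0 \<le> 2*m \<Longrightarrow> t0 < a \<or> b \<le> t0 \<Longrightarrow> v \<noteq> Sub (me t0) j"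
proof -
  assume a: "v \<in> Mset a b" "b \<le> 2*m+1" "t0 \<le> 2*m" "t0 < a \<or> b \<le> t0"
  show ?thesis using a(1)
  proof (rule MsetE)
    fix t assume "t < b" "v = mz t"
    then show ?thesis using mz_not_Sub[of t] a by auto
  next
    fix t j' assume t: "a \<le> t" "t < b" "v = Sub (me t) j'"
    have "me t \<noteq> me t0" using t a by (auto simp: me_inj)
    then show ?thesis using t by simp
  qed
qed

lemma noSub_J: "1 \<le> i \<Longrightarrow> i \<le> m \<Longrightarrow> t0 \<le> 2*m \<Longrightarrow> v \<in> Jset i \<Longrightarrow> v \<noteq> Sub (me t0) j"
proof -
  assume a: "1 \<le> i" "i \<le> m" "t0 \<le> 2*m" "v \<in> Jset i"
  have "lam k i \<noteq> Sub (me t0) j" using lam_mz[OF a(1,2)] mz_not_Sub[of "2*i-2"] a by simp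
  moreover have "ll i \<noteq> me t0" "lr i \<noteq> me t0" using me_ne_ll[of t0 i] a by auto
  moreover have "pv i \<noteq> Sub (me t0) j" by (rule pv_Sub)
  moreover have "\<And>j'. Sub (ll i) j' \<noteq> Sub (me t0) j" "\<And>j'. Sub (lr i) j' \<noteq> Sub (me t0) j"
    using \<open>ll i \<noteq> me t0\<close> \<open>lr i \<noteq> me t0\<close> by simp_all
  ultimately show ?thesis using a(4) unfolding Jset_def by auto
qed

lemma K3: "t0 \<le> 2*m \<Longrightarrow> \<exists>P. good P \<and> (\<forall>v \<in> set P. \<forall>j. v \<noteq> Sub (me t0) j)"
proof -
  assume t0: "t0 \<le> 2*m"
  show ?thesis
  proof (cases "t0 = 0")
    case True
    have g: "good (Mo 1 (2*m+1) @ [mz (2*m+1)]) \<and> set (Mo 1 (2*m+1) @ [mz (2*m+1)]) \<subseteq> Mset 1 (2*m+1) \<union> {mz (2*m+1)}"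
      using good_M[of 1 "2*m+1"] m8 by auto
    have "\<forall>v \<in> set (Mo 1 (2*m+1) @ [mz (2*m+1)]). \<forall>j. v \<noteq> Sub (me t0) j"
    proof (intro ballI allI)
      fix v j assume "v \<in> set (Mo 1 (2*m+1) @ [mz (2*m+1)])"
      then have "v \<in> Mset 1 (2*m+1) \<or> v = mz (2*m+1)" using g by blast
      then show "v \<noteq> Sub (me t0) j"
      proof
        assume "v \<in> Mset 1 (2*m+1)" then show ?thesis using noSub_M[of v 1 "2*m+1" t0] True by simp
      next
        assume "v = mz (2*m+1)" then show ?thesis using mz_not_Sub[of "2*m+1"] by simp
      qed
    qed
    then show ?thesis using g by blast
  next
    case False
    define i where "i = (t0 + 1) div 2"
    have i: "1 \<le> i" "i \<le> m" "t0 = 2*i-1 \<or> t0 = 2*i" using False t0 unfolding i_def by presburger+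
    have g: "good (PJ i)" and st: "set (PJ i) \<subseteq> Mset 0 (2*i-2) \<union> Jset i \<union> Mset (2*i+1) (2*m+1) \<union> {mz (2*m+1)}"
      using good_J[OF i(1,2)] by auto
    have "\<forall>v \<in> set (PJ i). \<forall>j. v \<noteq> Sub (me t0) j"
    proof (intro ballI allI)
      fix v j assume "v \<in> set (PJ i)"
      then consider "v \<in> Mset 0 (2*i-2)" | "v \<in> Jset i" | "v \<in> Mset (2*i+1) (2*m+1)" | "v = mz (2*m+1)"
        using st by blast
      then show "v \<noteq> Sub (me t0) j"
      proof cases
        case 1
        have "2*i-2 \<le> t0" using i by auto
        with 1 show ?thesis using noSub_M[of v 0 "2*i-2" t0 j] i t0 by auto
      next
        case 2 then show ?thesis using noSub_J[OF i(1,2) t0] by auto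
      next
        case 3
        have "t0 < 2*i+1" using i by auto
        with 3 show ?thesis using noSub_M[of v "2*i+1" "2*m+1" t0 j] i t0 by auto
      next
        case 4 then show ?thesis using mz_not_Sub[of "2*m+1"] by auto
      qed
    qed
    then show ?thesis using g by blast
  qed
qed


lemma phcase: "t0 \<le> 2*m+1 \<Longrightarrow> ph (mz t0) y \<le> int l \<Longrightarrow> \<exists>P. good P \<and> (\<forall>v \<in> set P. \<not> dist_le k L y v l)"
proof -
  assume t0: "t0 \<le> 2*m+1" and y: "ph (mz t0) y \<le> int l"
  obtain P where P: "good P" "\<forall>v \<in> set P. ph (mz t0) v = 2 * int l + 1" using K2[OF t0] by blast
  have "\<forall>v \<in> set P. \<not> dist_le k L y v l"
    using P(2) y by (intro far_all[OF ph_lip[OF mz_Z[OF t0]]]) auto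
  then show ?thesis using P(1) by blast
qed

lemma Zcase: "y \<in> Zset k \<Longrightarrow> \<exists>P. good P \<and> (\<forall>v \<in> set P. \<not> dist_le k L y v l)"
proof -
  assume y: "y \<in> Zset k"
  obtain t0 where t0: "t0 \<le> 2*m+1" "y = mz t0" using Z_mz[OF y] by blast
  have "ph (mz t0) y = 0" using t0 by (simp add: ph_def mz_vcase)
  then show ?thesis using phcase[OF t0(1)] by simp
qed

lemma ps_other: "(\<And>j'. v \<noteq> Sub e0 j') \<Longrightarrow> ps e0 j0 v = int l + 1"
  by (cases v) (auto simp: ps_def vcase_def)

lemma key: "y \<in> GV k L \<Longrightarrow> \<exists>P. good P \<and> (\<forall>v \<in> set P. \<not> dist_le k L y v l)"
proof -
  assume y: "y \<in> GV k L"
  consider (tr) c where "y = Tr c" "1 \<le> c" "c < 4*m" | (z) "y = S2 \<or> y = T1"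
    | (sb) e j where "y = Sub e j" "e \<in> sub_edges k" "1 \<le> j" "j < L e"
    using y unfolding GV_def tv_eq by auto
  then show ?thesis
  proof cases
    case tr
    show ?thesis
    proof (cases "2*m \<le> c")
      case True then show ?thesis using tr by (intro Zcase) (simp add: Tr_Z)
    next
      case False
      then have "gf y = int l + 1" using tr by (simp add: gf_def vcase_def Tr_Z)
      then show ?thesis by (rule K1)
    qed
  next
    case z then show ?thesis by (intro Zcase) (auto simp: Zset_eq)
  next
    case sb
    have Le: "L e \<ge> 2*l+1" using Lsub[OF sb(2)] by simp
    show ?thesis using sub_cases[OF sb(2)]
    proof (elim disjE exE conjE)
      fix t assume t: "t < 2*m+1" "e = me t"
      consider "j \<le> l" | "L e - j \<le> l" | "l < j \<and> L e > j + l" by linarith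
      then show ?thesis
      proof cases
        case 1
        have "ph (mz t) y \<le> int l" using sb t 1 by (simp add: ph_def me_def)
        then show ?thesis using t by (intro phcase[of t]) auto
      next
        case 2
        have "ph (mz (t+1)) y \<le> int (L e) - int j" using sb t by (simp add: ph_def me_def)
        then have "ph (mz (t+1)) y \<le> int l" using 2 sb by linarith
        then show ?thesis using t by (intro phcase[of "t+1"]) auto
      next
        case 3
        have lp: "lip (ps e j)" using 3 by (intro ps_lip) auto
        have py: "ps e j y = 0" using sb by (simp add: ps_def)
        obtain P where P: "good P" "\<forall>v \<in> set P. \<forall>j'. v \<noteq> Sub (me t) j'" using K3[of t] t by auto
        have "\<forall>v \<in> set P. ps e j v = int l + 1" using P(2) t ps_other by blast
        then have "\<forall>v \<in> set P. \<not> dist_le k L y v l" using py by (intro far_all[OF lp]) auto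
        then show ?thesis using P(1) by blast
      qed
    next
      fix c assume c: "2*m \<le> c" "c < 4*m" "e = (Tr (c div 2), Tr c)"
      have nz: "Tr (c div 2) \<notin> Zset k" using c by (auto simp: Tr_Z)
      show ?thesis
      proof (cases "L e - j \<le> l")
        case True
        have "Tr c \<in> Zset k" using c by (simp add: Tr_Z)
        then obtain t0 where t0: "t0 \<le> 2*m+1" "Tr c = mz t0" using Z_mz by blast
        have "ph (mz t0) y \<le> int (L e) - int j" using sb c t0 by (simp add: ph_def)
        then have "ph (mz t0) y \<le> int l" using True sb by linarith
        then show ?thesis using phcase[OF t0(1)] by blast
      next
        case False
        have "gf y = int l + 1" using sb c nz False by (simp add: gf_def)
        then show ?thesis by (rule K1)
      qed
    qed
  qed
qed



end

theorem mainTheorem2: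
  fixes l k :: nat and L :: "(vtx \<times> vtx) \<Rightarrow> nat" and X :: "vtx set"
  assumes "l \<ge> 1" and "k > 2 * l + 2"
    and "\<forall>e \<in> sub_edges k. L e > 2 * l"
    and "X \<subseteq> GV k L" and "finite X" and "card X \<le> 2"
  shows "\<exists>P. is_path k L P
           \<and> hd P \<in> {root, lam k 1, S2} \<and> last P \<in> {root, T1, rho k (m_of k)}
           \<and> (\<forall>x \<in> X. \<forall>v \<in> set P. \<not> dist_le k L x v l)"
proof -
  interpret c: cfg l k L using assms(1-3) by unfold_locales
  show ?thesis
  proof (cases "\<exists>x\<in>X. dist_le k L x root l")
    case False
    have "root \<in> GV k L" using c.m8 by (auto simp: GV_def c.tv_eq root_def)
    then have "is_path k L [root]" by (simp add: is_path_def)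
    then show ?thesis using False by (intro exI[of _ "[root]"]) auto
  next
    case True
    then obtain x1 where x1: "x1 \<in> X" "dist_le k L x1 root l" by blast
    have Dx1: "c.Dp x1 \<le> int l"
    proof (rule ccontr)
      assume "\<not> c.Dp x1 \<le> int l"
      then have "\<bar>c.Dp x1 - c.Dp root\<bar> > int l" by (simp add: c.Dp_root)
      then show False using c.far[OF c.Dp_lip] x1(2) by blast
    qed
    have "\<exists>x2. X \<subseteq> {x1, x2} \<and> x2 \<in> GV k L"
    proof (cases "X - {x1} = {}")
      case True
      then have "X \<subseteq> {x1, x1}" by auto
      moreover have "x1 \<in> GV k L" using x1(1) assms(4) by (rule subsetD[rotated])
      ultimately show ?thesis by (intro exI[of _ x1]) simp
    next
      case False
      then obtain x2 where x2: "x2 \<in> X" "x2 \<noteq> x1" by auto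
      have fin: "finite (X - {x1})" using assms(5) by simp
      have "card (X - {x1}) \<le> Suc 0" using assms(6) x1(1) by (simp add: card_Diff_singleton)
      then have all: "\<forall>a\<in>X - {x1}. \<forall>b\<in>X - {x1}. a = b" using card_le_Suc0_iff_eq[OF fin] by simp
      have "X \<subseteq> {x1, x2}"
      proof
        fix y assume y: "y \<in> X"
        show "y \<in> {x1, x2}"
        proof (cases "y = x1")
          case False
          then have "y \<in> X - {x1}" "x2 \<in> X - {x1}" using y x2 by simp_all
          then have "y = x2" using all by simp
          then show ?thesis by simp
        qed simp
      qed
      moreover have "x2 \<in> GV k L" using x2(1) assms(4) by (rule subsetD[rotated])
      ultimately show ?thesis by (intro exI[of _ x2]) simp
    qed
    then obtain x2 where x2: "X \<subseteq> {x1, x2}" "x2 \<in> GV k L" by blast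
    obtain P where P: "c.good P" "\<forall>v \<in> set P. \<not> dist_le k L x2 v l" using c.key[OF x2(2)] by blast
    have "\<forall>v \<in> set P. \<not> dist_le k L x1 v l"
    proof
      fix v assume v: "v \<in> set P"
      then have "c.Dp v \<ge> int k - 2" using P(1) unfolding c.good_def by blast
      then have "\<bar>c.Dp x1 - c.Dp v\<bar> > int l" using Dx1 assms(2) by linarith
      then show "\<not> dist_le k L x1 v l" using c.far[OF c.Dp_lip] by blast
    qed
    then have "\<forall>x \<in> X. \<forall>v \<in> set P. \<not> dist_le k L x v l" using P(2) x2(1) by blast
    then show ?thesis using P(1) unfolding c.good_def by blast
  qed
qed

end
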